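(* Let $\varphi\in\mathcal{G}^{\rm dec}_2$ and $1\le q\le p<\infty$, and assume $r^{-n/p}\lesssim\varphi(r)$ for $r>0$. Suppose that a diffeomorphism $\psi:\mathbb{R}^n\to\mathbb{R}^n$ induces a bounded composition operator $C_\psi$ from $\mathcal{M}_q^\varphi(\mathbb{R}^n)$ to itself. Then there is a constant $C>0$ such that for all $x_0\in\mathbb{R}^n$ and all $f\in\mathcal{M}_q^\varphi(\mathbb{R}^n)$, \[ \|f(D\psi(x_0)\,\cdot)\|_{\mathcal{M}_q^\varphi}\le C\|f\|_{\mathcal{M}_q^\varphi}. \]
   Context: $\mathcal{G}^{\rm dec}_2$ is the set of $\varphi:(0,\infty)\to(0,\infty)$ that are almost decreasing (there is $C>0$ with $C\varphi(r)\ge\varphi(s)$ for $r<s$), submultiplicative ($\varphi(rs)\le C\varphi(r)\varphi(s)$), satisfy $\lim_{r\to0}\varphi(r)=\infty$, $\lim_{r\to\infty}\varphi(r)=0$, and $\varphi(1/r)\le C/\varphi(r)$ for some $C>0$. $g\lesssim h$ means $g\le Ch$ for a constant $C>0$. The generalized Morrey space $\mathcal{M}_q^\varphi(\mathbb{R}^n)$ consists of measurable $f$ with $\|f\|_{\mathcal{M}_q^\varphi}=\sup_{a\in\mathbb{R}^n,r>0}\frac1{\varphi(r)}\bigl(\frac1{|B(a,r)|}\int_{B(a,r)}|f(y)|^qdy\bigr)^{1/q}<\infty$. A diffeomorphism is a bijection $\psi$ with $\psi,\psi^{-1}$ differentiable; $D\psi(x_0)$ is its Jacobi matrix at $x_0$;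 $C_\psi f=f\circ\psi$. *)

theory Defs
  imports "HOL-Analysis.Analysis"
begin

definition Gdec2 :: "(real \<Rightarrow> real) set" where
  "Gdec2 = {\<phi>.
     (\<forall>r>0. \<phi> r > 0) \<and>
     (\<exists>C>0. \<forall>r s. 0 < r \<longrightarrow> r < s \<longrightarrow> \<phi> s \<le> C * \<phi> r) \<and>
     (\<exists>C>0. \<forall>r>0. \<forall>s>0. \<phi> (r * s) \<le> C * \<phi> r * \<phi> s) \<and>
     filterlim \<phi> at_top (at_right 0) \<and>
     (\<phi> \<longlongrightarrow> 0) at_top \<and>
     (\<exists>C>0. \<forall>r>0. \<phi> (1 / r) \<le> C / \<phi> r)}"

definition ennroot :: "real \<Rightarrow> ennreal \<Rightarrow> ennreal" where
  "ennroot q x = (if x = top then top else ennreal (enn2real x powr (1 / q)))"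

definition morrey_norm :: "(real \<Rightarrow> real) \<Rightarrow> real \<Rightarrow> (real ^ 'n \<Rightarrow> real) \<Rightarrow> ennreal" where
  "morrey_norm \<phi> q f =
     (SUP ar \<in> (UNIV :: (real ^ 'n) set) \<times> {0<..}.
        ennreal (1 / \<phi> (snd ar)) *
        ennroot q ((\<integral>\<^sup>+ y \<in> ball (fst ar) (snd ar). ennreal (\<bar>f y\<bar> powr q) \<partial>lebesgue)
                   / emeasure lebesgue (ball (fst ar) (snd ar))))"

definition morrey_space :: "(real \<Rightarrow> real) \<Rightarrow> real \<Rightarrow> (real ^ 'n \<Rightarrow> real) set" where
  "morrey_space \<phi> q = {f. f \<in> borel_measurable lebesgue \<and> morrey_norm \<phi> q f < top}"

definition diffeomorphism :: "(real ^ 'n \<Rightarrow> real ^ 'n) \<Rightarrow> bool" where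
  "diffeomorphism \<psi> \<longleftrightarrow> bij \<psi> \<and> (\<forall>x. \<psi> differentiable (at x))
                          \<and> (\<forall>x. inv \<psi> differentiable (at x))"

definition jacobi :: "(real ^ 'n \<Rightarrow> real ^ 'n) \<Rightarrow> real ^ 'n \<Rightarrow> real ^ 'n ^ 'n" where
  "jacobi \<psi> x0 = matrix (frechet_derivative \<psi> (at x0))"

end

theory Submission
  imports Defs
begin

lemma emeasure_ball_eq: "emeasure lebesgue (ball (c::'a::euclidean_space) r) = ennreal (measure lborel (ball c r))"
  using emeasure_lborel_ball_finite[of c r] by (subst emeasure_eq_ennreal_measure) auto

lemma ennroot_le_iff:
  assumes q: "0 < q" and c: "0 \<le> c"
  shows "ennroot q x \<le> ennreal c \<longleftrightarrow> x \<le> ennreal (c powr q)"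
proof (cases "x = top")
  case True
  then show ?thesis by (simp add: ennroot_def top_unique)
next
  case False
  then obtain s where s: "x = ennreal s" "0 \<le> s" by (cases x) auto
  have "s powr (1/q) \<le> c \<longleftrightarrow> s \<le> c powr q"
  proof
    assume "s powr (1/q) \<le> c"
    then have "(s powr (1/q)) powr q \<le> c powr q" using s q by (intro powr_mono2) auto
    then show "s \<le> c powr q" using s q by (simp add: powr_powr)
  next
    assume "s \<le> c powr q"
    then have "s powr (1/q) \<le> (c powr q) powr (1/q)" using s q by (intro powr_mono2) auto
    then show "s powr (1/q) \<le> c" using c q by (simp add: powr_powr)
  qed
  then show ?thesis using s c False by (simp add: ennroot_def)
qed

definition ballint :: "real \<Rightarrow> (real^'n \<Rightarrow> real) \<Rightarrow> real^'n \<Rightarrow> real \<Rightarrow> ennreal" where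
  "ballint q f a r = (\<integral>\<^sup>+ y \<in> ball a r. ennreal (\<bar>f y\<bar> powr q) \<partial>lebesgue)"

lemma morrey_le_iff:
  assumes phipos: "\<And>r. r > 0 \<Longrightarrow> \<phi> r > 0" and q: "0 < q" and M: "0 \<le> M"
  shows "morrey_norm \<phi> q f \<le> ennreal M \<longleftrightarrow>
    (\<forall>a. \<forall>r>0. ballint q f a r \<le> ennreal ((\<phi> r * M) powr q * measure lborel (ball a r)))"
proof -
  have termeq: "ennreal (1 / \<phi> r) * ennroot q (ballint q f a r / emeasure lebesgue (ball a r)) \<le> ennreal M
     \<longleftrightarrow> ballint q f a r \<le> ennreal ((\<phi> r * M) powr q * measure lborel (ball a r))" if r: "r > 0" for a r
  proof -
    let ?X = "ennroot q (ballint q f a r / emeasure lebesgue (ball a r))"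
    have ph: "\<phi> r > 0" using phipos r by auto
    have cb: "measure lborel (ball a r) > 0" using content_ball_pos r by auto
    have "ennreal (1 / \<phi> r) * ?X \<le> ennreal M \<longleftrightarrow> ?X \<le> ennreal (\<phi> r * M)"
    proof
      assume h: "ennreal (1 / \<phi> r) * ?X \<le> ennreal M"
      have "?X = ennreal (\<phi> r) * (ennreal (1 / \<phi> r) * ?X)"
        using ph by (simp add: ennreal_mult'[symmetric] mult.assoc[symmetric] del: ennreal_mult')
      also have "\<dots> \<le> ennreal (\<phi> r) * ennreal M" using h by (intro mult_left_mono) auto
      finally show "?X \<le> ennreal (\<phi> r * M)" using ph M by (simp add: ennreal_mult)
    next
      assume h: "?X \<le> ennreal (\<phi> r * M)"
      have "ennreal (1 / \<phi> r) * ?X \<le> ennreal (1 / \<phi> r) * ennreal (\<phi> r * M)"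
        using h by (intro mult_left_mono) auto
      also have "\<dots> = ennreal M" using ph M by (simp add: ennreal_mult[symmetric])
      finally show "ennreal (1 / \<phi> r) * ?X \<le> ennreal M" .
    qed
    also have "\<dots> \<longleftrightarrow> ballint q f a r / emeasure lebesgue (ball a r) \<le> ennreal ((\<phi> r * M) powr q)"
      using q ph M by (intro ennroot_le_iff) auto
    also have "\<dots> \<longleftrightarrow> ballint q f a r \<le> ennreal ((\<phi> r * M) powr q) * ennreal (measure lborel (ball a r))"
    proof
      assume h: "ballint q f a r / emeasure lebesgue (ball a r) \<le> ennreal ((\<phi> r * M) powr q)"
      have "ballint q f a r = (ballint q f a r / ennreal (measure lborel (ball a r))) * ennreal (measure lborel (ball a r))"
        using cb by (simp add: ennreal_divide_times)
      also have "\<dots> \<le> ennreal ((\<phi> r * M) powr q) * ennreal (measure lborel (ball a r))"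
        using h by (intro mult_right_mono) (auto simp: emeasure_ball_eq)
      finally show "ballint q f a r \<le> ennreal ((\<phi> r * M) powr q) * ennreal (measure lborel (ball a r))" .
    next
      assume h: "ballint q f a r \<le> ennreal ((\<phi> r * M) powr q) * ennreal (measure lborel (ball a r))"
      show "ballint q f a r / emeasure lebesgue (ball a r) \<le> ennreal ((\<phi> r * M) powr q)"
        unfolding emeasure_ball_eq using cb h
        by (intro divide_le_posI_ennreal) (auto simp: mult.commute)
    qed
    finally show ?thesis using cb by (simp add: ennreal_mult)
  qed
  define T where "T a r = ennreal (1 / \<phi> r) * ennroot q (ballint q f a r / emeasure lebesgue (ball a r))" for a r
  have "morrey_norm \<phi> q f \<le> ennreal M \<longleftrightarrow> (\<forall>ar \<in> UNIV \<times> {0<..}. T (fst ar) (snd ar) \<le> ennreal M)"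
    unfolding morrey_norm_def ballint_def[symmetric] T_def by (rule SUP_le_iff)
  also have "\<dots> \<longleftrightarrow> (\<forall>a. \<forall>r>0. T a r \<le> ennreal M)" by auto
  also have "\<dots> \<longleftrightarrow> (\<forall>a. \<forall>r>0. ballint q f a r \<le> ennreal ((\<phi> r * M) powr q * measure lborel (ball a r)))"
    unfolding T_def using termeq by blast
  finally show ?thesis .
qed

lemma lebesgue_affine_scale:
  fixes c :: "real^'n" assumes s: "s > 0"
  shows "lebesgue = density (distr lebesgue lebesgue (\<lambda>x. c + s *\<^sub>R x)) (\<lambda>_. ennreal (s ^ CARD('n)))"
    and "(\<lambda>x. c + s *\<^sub>R x) \<in> lebesgue \<rightarrow>\<^sub>M lebesgue"
  using lebesgue_affine_euclidean[where c="\<lambda>_::real^'n. s" and t=c]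
    lebesgue_affine_measurable[where c="\<lambda>_::real^'n. s" and t=c] s
  unfolding scaleR_scaleR[symmetric] scaleR_sum_right[symmetric] euclidean_representation prod_constant
  by auto

lemma nn_integral_affine_scale:
  fixes W :: "real^'n \<Rightarrow> ennreal" and c :: "real^'n"
  assumes W[measurable]: "W \<in> borel_measurable lebesgue" and s: "s > 0"
  shows "(\<integral>\<^sup>+x. W x \<partial>lebesgue) = ennreal (s ^ CARD('n)) * (\<integral>\<^sup>+y. W (c + s *\<^sub>R y) \<partial>lebesgue)"
proof -
  have m[measurable]: "(\<lambda>x. c + s *\<^sub>R x) \<in> lebesgue \<rightarrow>\<^sub>M lebesgue" using lebesgue_affine_scale(2)[OF s] .
  have "(\<integral>\<^sup>+x. W x \<partial>lebesgue) = (\<integral>\<^sup>+x. W x \<partial>density (distr lebesgue lebesgue (\<lambda>x. c + s *\<^sub>R x)) (\<lambda>_. ennreal (s ^ CARD('n))))"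
    using lebesgue_affine_scale(1)[OF s, of c] by simp
  also have "\<dots> = (\<integral>\<^sup>+x. ennreal (s ^ CARD('n)) * W x \<partial>distr lebesgue lebesgue (\<lambda>x. c + s *\<^sub>R x))"
    by (subst nn_integral_density) auto
  also have "\<dots> = ennreal (s ^ CARD('n)) * (\<integral>\<^sup>+x. W x \<partial>distr lebesgue lebesgue (\<lambda>x. c + s *\<^sub>R x))"
    by (rule nn_integral_cmult) simp
  also have "\<dots> = ennreal (s ^ CARD('n)) * (\<integral>\<^sup>+y. W (c + s *\<^sub>R y) \<partial>lebesgue)"
    by (subst nn_integral_distr) auto
  finally show ?thesis .
qed

lemma ball_affine_iff:
  fixes c a y :: "'a::real_normed_vector" assumes s: "s > 0"
  shows "(c + s *\<^sub>R y \<in> ball (c + s *\<^sub>R a) (s * r)) \<longleftrightarrow> y \<in> ball a r"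
proof -
  have "dist (c + s *\<^sub>R a) (c + s *\<^sub>R y) = s * dist a y"
    using s by (simp add: dist_norm scaleR_diff_right[symmetric])
  then show ?thesis using s by (simp add: mem_ball)
qed

lemma content_ball_affine:
  fixes c a :: "real^'n" assumes s: "s > 0" and r: "r \<ge> 0"
  shows "measure lborel (ball (c + s *\<^sub>R a) (s * r)) = s ^ CARD('n) * measure lborel (ball a r)"
  using s r content_ball_conv_unit_ball[of "s*r" "c + s *\<^sub>R a"] content_ball_conv_unit_ball[of r a]
  by (simp add: power_mult_distrib)

lemma ball_sets_lebesgue[measurable]: "ball (x::'a::euclidean_space) r \<in> sets lebesgue"
  by (simp add: fmeasurableD lmeasurable_ball)

lemma ballint_affine:
  fixes u :: "real^'n \<Rightarrow> real" and c :: "real^'n"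
  assumes u[measurable]: "u \<in> borel_measurable lebesgue" and s: "s > 0"
  shows "ballint q u (c + s *\<^sub>R a) (s * r) = ennreal (s ^ CARD('n)) * ballint q (\<lambda>y. u (c + s *\<^sub>R y)) a r"
proof -
  have "ballint q u (c + s *\<^sub>R a) (s * r) = (\<integral>\<^sup>+x. ennreal (\<bar>u x\<bar> powr q) * indicator (ball (c + s *\<^sub>R a) (s * r)) x \<partial>lebesgue)"
    unfolding ballint_def by simp
  also have "\<dots> = ennreal (s ^ CARD('n)) * (\<integral>\<^sup>+y. ennreal (\<bar>u (c + s *\<^sub>R y)\<bar> powr q) * indicator (ball (c + s *\<^sub>R a) (s * r)) (c + s *\<^sub>R y) \<partial>lebesgue)"
    by (rule nn_integral_affine_scale) (auto simp: s)
  also have "\<dots> = ennreal (s ^ CARD('n)) * ballint q (\<lambda>y. u (c + s *\<^sub>R y)) a r"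
    unfolding ballint_def using ball_affine_iff[OF s, of c _ a r]
    by (simp add: indicator_def)
  finally show ?thesis .
qed

lemma morrey_norm_affine:
  fixes u :: "real^'n \<Rightarrow> real" and c :: "real^'n"
  assumes phipos: "\<And>r. r > 0 \<Longrightarrow> \<phi> r > 0"
    and sub: "\<And>r s. r > 0 \<Longrightarrow> s > 0 \<Longrightarrow> \<phi> (r * s) \<le> Cs * \<phi> r * \<phi> s"
    and q: "0 < q" and u[measurable]: "u \<in> borel_measurable lebesgue"
    and U: "0 \<le> U" and uU: "morrey_norm \<phi> q u \<le> ennreal U" and s: "s > 0"
  shows "morrey_norm \<phi> q (\<lambda>y. u (c + s *\<^sub>R y)) \<le> ennreal (Cs * \<phi> s * U)"
proof -
  have Cs: "Cs > 0"
  proof -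
    have p1: "\<phi> 1 > 0" using phipos by simp
    have "\<phi> 1 * 1 \<le> \<phi> 1 * (Cs * \<phi> 1)" using sub[of 1 1] by (simp add: mult_ac)
    then have "1 \<le> Cs * \<phi> 1" using p1 by (simp add: mult_le_cancel_left)
    then have "0 < Cs * \<phi> 1" by simp
    then show ?thesis using p1 by (simp add: zero_less_mult_iff)
  qed
  have B: "\<forall>a. \<forall>r>0. ballint q u a r \<le> ennreal ((\<phi> r * U) powr q * measure lborel (ball a r))"
    using morrey_le_iff[where \<phi>=\<phi>, OF phipos q U] uU by blast
  have nn: "0 \<le> Cs * \<phi> s * U" using Cs phipos[OF s] U by simp
  have "\<forall>a. \<forall>r>0. ballint q (\<lambda>y. u (c + s *\<^sub>R y)) a r \<le> ennreal ((\<phi> r * (Cs * \<phi> s * U)) powr q * measure lborel (ball a r))"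
  proof (intro allI impI)
    fix a :: "real^'n" and r :: real assume r: "r > 0"
    have sp: "(0::real) < s ^ CARD('n)" using s by simp
    have "ennreal (s ^ CARD('n)) * ballint q (\<lambda>y. u (c + s *\<^sub>R y)) a r = ballint q u (c + s *\<^sub>R a) (s * r)"
      using ballint_affine[OF u s] by simp
    also have "\<dots> \<le> ennreal ((\<phi> (s * r) * U) powr q * measure lborel (ball (c + s *\<^sub>R a) (s * r)))"
      using B s r by simp
    also have "\<dots> = ennreal (s ^ CARD('n)) * ennreal ((\<phi> (s * r) * U) powr q * measure lborel (ball a r))"
      using content_ball_affine[OF s, of r c a] r sp
      by (simp add: ennreal_mult'[symmetric] mult_ac)
    finally have 1: "ballint q (\<lambda>y. u (c + s *\<^sub>R y)) a r \<le> ennreal ((\<phi> (s * r) * U) powr q * measure lborel (ball a r))"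
      using sp s by (subst (asm) ennreal_mult_le_mult_iff) auto
    have "\<phi> (s * r) * U \<le> \<phi> r * (Cs * \<phi> s * U)"
      using mult_right_mono[OF sub[OF s r] U] by (simp add: mult_ac)
    then have "(\<phi> (s * r) * U) powr q \<le> (\<phi> r * (Cs * \<phi> s * U)) powr q"
      using phipos[of "s*r"] s r U q by (intro powr_mono2) auto
    then have "(\<phi> (s * r) * U) powr q * measure lborel (ball a r) \<le> (\<phi> r * (Cs * \<phi> s * U)) powr q * measure lborel (ball a r)"
      by (intro mult_right_mono) auto
    with 1 show "ballint q (\<lambda>y. u (c + s *\<^sub>R y)) a r \<le> ennreal ((\<phi> r * (Cs * \<phi> s * U)) powr q * measure lborel (ball a r))"
      by (meson ennreal_leI order_trans)
  qed
  then show ?thesis using morrey_le_iff[where \<phi>=\<phi>, OF phipos q nn] by blast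
qed

lemma diffeo_deriv:
  fixes \<psi> :: "real^'n \<Rightarrow> real^'n" and x0 :: "real^'n"
  assumes d: "diffeomorphism \<psi>"
  defines "A \<equiv> frechet_derivative \<psi> (at x0)"
  shows "(\<psi> has_derivative A) (at x0)" and "linear A" and "\<And>y. jacobi \<psi> x0 *v y = A y"
    and "\<exists>Ai. linear Ai \<and> (\<forall>x. Ai (A x) = x) \<and> (\<forall>x. A (Ai x) = x)"
proof -
  show D: "(\<psi> has_derivative A) (at x0)"
    using d unfolding diffeomorphism_def A_def by (simp add: frechet_derivative_works[symmetric])
  show L: "linear A" using has_derivative_linear[OF D] .
  show "\<And>y. jacobi \<psi> x0 *v y = A y" unfolding jacobi_def A_def[symmetric] using L by (simp add: linear_linear matrix_works)
  define B where "B = frechet_derivative (inv \<psi>) (at (\<psi> x0))"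
  have DB: "(inv \<psi> has_derivative B) (at (\<psi> x0))"
    using d unfolding diffeomorphism_def B_def by (simp add: frechet_derivative_works[symmetric])
  have comp: "((\<lambda>x. inv \<psi> (\<psi> x)) has_derivative (\<lambda>x. B (A x))) (at x0)"
    by (rule has_derivative_compose[OF D DB])
  have "inj \<psi>" using d unfolding diffeomorphism_def by (simp add: bij_is_inj)
  then have "(\<lambda>x. inv \<psi> (\<psi> x)) = (\<lambda>x. x)" by (simp add: fun_eq_iff)
  with comp have "((\<lambda>x. x) has_derivative (\<lambda>x. B (A x))) (at x0)" by simp
  then have "(\<lambda>x. B (A x)) = (\<lambda>x. x)" using has_derivative_ident has_derivative_unique by blast
  then have "inj A" by (metis injI)
  then show "\<exists>Ai. linear Ai \<and> (\<forall>x. Ai (A x) = x) \<and> (\<forall>x. A (Ai x) = x)"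
    using L linear_injective_isomorphism by blast
qed

lemma linear_iso_measurable:
  fixes A :: "real^'n \<Rightarrow> real^'n"
  assumes L: "linear A" and Ai: "linear Ai" and inv1: "\<And>x. Ai (A x) = x" and inv2: "\<And>x. A (Ai x) = x"
  shows "A \<in> lebesgue \<rightarrow>\<^sub>M lebesgue"
proof -
  have cont: "continuous_on UNIV A" using L by (simp add: linear_continuous_on linear_linear)
  have bA: "A \<in> borel_measurable borel" using borel_measurable_continuous_onI[OF cont] .
  then have A1: "A \<in> lebesgue \<rightarrow>\<^sub>M lborel"
    by (intro measurable_completion) simp
  obtain B where B: "\<And>x. norm (Ai x) \<le> B * norm x"
    using linear_bounded[OF Ai] by blast
  have "null_sets lborel \<subseteq> null_sets (distr lebesgue lborel A)"
  proof
    fix X :: "(real^'n) set" assume X: "X \<in> null_sets lborel"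
    have Xl: "X \<in> sets borel" using X by (auto simp: null_sets_def)
    have "negligible X" using null_sets_completionI[OF X] by (simp add: negligible_iff_null_sets)
    then have "negligible (Ai ` X)"
    proof (rule negligible_locally_Lipschitz_image[rotated])
      show "DIM(real^'n) \<le> DIM(real^'n)" by simp
      fix x assume "x \<in> X"
      show "\<exists>T B. open T \<and> x \<in> T \<and> (\<forall>y\<in>X \<inter> T. norm (Ai y - Ai x) \<le> B * norm (y - x))"
        using B by (intro exI[of _ UNIV] exI[of _ B]) (auto simp: linear_diff[OF Ai, symmetric])
    qed
    moreover have "A -` X = Ai ` X"
      using inv1 inv2 by (auto simp: image_iff) (metis)
    ultimately have "A -` X \<in> null_sets lebesgue" by (simp add: negligible_iff_null_sets)
    then show "X \<in> null_sets (distr lebesgue lborel A)"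
      using A1 Xl by (auto simp: null_sets_def emeasure_distr)
  qed
  then show ?thesis
    using completion.measurable_completion2[OF A1] by simp
qed

lemma comp_linear_measurable:
  fixes A :: "real^'n \<Rightarrow> real^'n" and g :: "real^'n \<Rightarrow> real"
  assumes "A \<in> lebesgue \<rightarrow>\<^sub>M lebesgue" and "g \<in> borel_measurable lebesgue"
  shows "(\<lambda>y. g (A y)) \<in> borel_measurable lebesgue"
  using measurable_compose[OF assms] by simp

lemma min_geom:
  fixes z X Y \<theta> :: real
  assumes "0 \<le> z" "z \<le> X" "z \<le> Y" "0 \<le> \<theta>" "\<theta> \<le> 1"
  shows "z \<le> X powr (1 - \<theta>) * Y powr \<theta>"
proof (cases "z = 0")
  case True
  then show ?thesis using assms by simp
next
  case False
  then have z: "z > 0" using assms by simp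
  have "z = z powr (1 - \<theta>) * z powr \<theta>" using z by (simp add: powr_add[symmetric])
  also have "\<dots> \<le> X powr (1 - \<theta>) * Y powr \<theta>"
    using assms z by (intro mult_mono powr_mono2) auto
  finally show ?thesis .
qed

lemma small_morrey:
  fixes w :: "real^'n \<Rightarrow> real"
  assumes phipos: "\<And>r. r > 0 \<Longrightarrow> \<phi> r > 0"
    and growth: "\<And>r. r > 0 \<Longrightarrow> r powr (- real CARD('n) / p) \<le> Cg * \<phi> r" and Cg: "Cg > 0"
    and q: "1 \<le> q" and qp: "q \<le> p"
    and w[measurable]: "w \<in> borel_measurable lebesgue"
    and a: "0 \<le> a" and wa: "\<And>x. \<bar>w x\<bar> \<le> a"
    and b: "0 \<le> b" and wb: "(\<integral>\<^sup>+x. ennreal (\<bar>w x\<bar> powr q) \<partial>lebesgue) \<le> ennreal b"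
  shows "\<forall>x. \<forall>r>0. ballint q w x r \<le> ennreal (\<phi> r powr q *
           ((a powr q) powr (1 - q/p) * b powr (q/p) * measure lborel (ball (0::real^'n) 1) powr (- (q/p)) * Cg powr q)
           * measure lborel (ball x r))"
proof (intro allI impI)
  fix x :: "real^'n" and r :: real assume r: "r > 0"
  define \<theta> where "\<theta> = q / p"
  define m where "m = measure lborel (ball x r)"
  define m1 where "m1 = measure lborel (ball (0::real^'n) 1)"
  have m1: "m1 > 0" unfolding m1_def using content_ball_pos[of 1] by simp
  have mm1: "m = r ^ CARD('n) * m1" unfolding m_def m1_def using content_ball_conv_unit_ball[of r x] r by simp
  have m: "m > 0" using mm1 m1 r by simp
  have th: "0 < \<theta>" "\<theta> \<le> 1" using q qp unfolding \<theta>_def by auto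
  have I1: "ballint q w x r \<le> ennreal (a powr q * m)"
  proof -
    have "ballint q w x r \<le> (\<integral>\<^sup>+y. ennreal (a powr q) * indicator (ball x r) y \<partial>lebesgue)"
      unfolding ballint_def
      by (intro nn_integral_mono) (auto simp: indicator_def intro!: ennreal_leI powr_mono2 wa q order_trans[OF _ q])
    also have "\<dots> = ennreal (a powr q) * emeasure lebesgue (ball x r)"
      by (subst nn_integral_cmult_indicator) auto
    also have "\<dots> = ennreal (a powr q * m)"
      unfolding m_def emeasure_ball_eq by (simp add: ennreal_mult)
    finally show ?thesis .
  qed
  have I2: "ballint q w x r \<le> ennreal b"
  proof -
    have "ballint q w x r \<le> (\<integral>\<^sup>+y. ennreal (\<bar>w y\<bar> powr q) \<partial>lebesgue)"
      unfolding ballint_def by (intro nn_integral_mono) (auto simp: indicator_def)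
    then show ?thesis using wb by simp
  qed
  have fin: "ballint q w x r < top" using I2 by (simp add: le_less_trans)
  define z where "z = enn2real (ballint q w x r)"
  have zeq: "ballint q w x r = ennreal z" unfolding z_def using fin by simp
  have z0: "0 \<le> z" unfolding z_def by simp
  have z1: "z \<le> a powr q * m" using I1 zeq a m by (simp add: ennreal_le_iff)
  have z2: "z \<le> b" using I2 zeq b by (simp add: ennreal_le_iff)
  have "z \<le> (a powr q * m) powr (1 - \<theta>) * b powr \<theta>"
    using min_geom[OF z0 z1 z2] th by simp
  also have "(a powr q * m) powr (1 - \<theta>) = (a powr q) powr (1 - \<theta>) * m * m powr (- \<theta>)"
    using m a by (simp add: powr_mult powr_diff powr_minus divide_simps)
  also have "m powr (- \<theta>) = m1 powr (- \<theta>) * (r powr (- real CARD('n) / p)) powr q"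
    using m1 r unfolding mm1 \<theta>_def
    by (simp add: powr_mult powr_powr powr_realpow[symmetric])
  also have "\<dots> \<le> m1 powr (- \<theta>) * (Cg * \<phi> r) powr q"
    using growth[OF r] by (intro mult_left_mono powr_mono2) (auto simp: q order_trans[OF _ q])
  finally have "z \<le> (a powr q) powr (1 - \<theta>) * m * (m1 powr (- \<theta>) * (Cg * \<phi> r) powr q) * b powr \<theta>"
    using m b a by (simp add: mult_left_mono mult_right_mono)
  also have "\<dots> = \<phi> r powr q * ((a powr q) powr (1 - \<theta>) * b powr \<theta> * m1 powr (- \<theta>) * Cg powr q) * m"
    using Cg phipos[OF r] by (simp add: powr_mult mult_ac)
  finally show "ballint q w x r \<le> ennreal (\<phi> r powr q *
           ((a powr q) powr (1 - q/p) * b powr (q/p) * measure lborel (ball (0::real^'n) 1) powr (- (q/p)) * Cg powr q)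
           * measure lborel (ball x r))"
    unfolding zeq \<theta>_def[symmetric] m1_def[symmetric] m_def[symmetric] by (simp add: ennreal_leI)
qed

lemma open_sets_lebesgue: "open U \<Longrightarrow> U \<in> sets (lebesgue :: 'a::euclidean_space measure)"
  by (simp add: borel_open)

lemma nc1: "0 \<le> x \<Longrightarrow> x \<le> real (nat \<lceil>x\<rceil>)"
proof -
  assume "0 \<le> x" then have "0 \<le> \<lceil>x\<rceil>" by simp
  then have "real (nat \<lceil>x\<rceil>) = real_of_int \<lceil>x\<rceil>" by simp
  then show ?thesis by (simp add: le_of_int_ceiling)
qed
lemma nc2: "0 \<le> x \<Longrightarrow> real (nat \<lceil>x\<rceil>) \<le> x + 1"
proof -
  assume "0 \<le> x" then have "0 \<le> \<lceil>x\<rceil>" by simp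
  then have "real (nat \<lceil>x\<rceil>) = real_of_int \<lceil>x\<rceil>" by simp
  then show ?thesis using of_int_ceiling_le_add_one[of x] by simp
qed
lemma nc3: "j < nat \<lceil>x\<rceil> \<Longrightarrow> real j < (x::real)"
proof -
  assume "j < nat \<lceil>x\<rceil>" then have "int j < \<lceil>x\<rceil>" by linarith
  then show ?thesis by (simp add: less_ceiling_iff)
qed
lemma nc4: "real j < (x::real) \<Longrightarrow> j < nat \<lceil>x\<rceil>"
proof -
  assume "real j < x" then have "int j < \<lceil>x\<rceil>" by (simp add: less_ceiling_iff)
  then show ?thesis by linarith
qed

lemma majorant:
  fixes u :: "real^'n \<Rightarrow> real"
  assumes u[measurable]: "u \<in> borel_measurable lebesgue"
    and u0: "\<And>x. 0 \<le> u x" and uN: "\<And>x. u x \<le> N" and usupp: "\<And>x. x \<notin> ball 0 R \<Longrightarrow> u x = 0"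
    and \<delta>: "0 < \<delta>" "\<delta> \<le> 1" and \<eta>: "0 < \<eta>" and N: "0 \<le> N"
  shows "\<exists>V M e. (\<forall>j. open (V j)) \<and> (\<forall>x. u x \<le> \<delta> * (\<Sum>j\<le>(M::nat). indicator (V j) x))
     \<and> e \<in> borel_measurable lebesgue \<and> (\<forall>x. \<delta> * (\<Sum>j\<le>M. indicator (V j) x) \<le> u x + e x)
     \<and> (\<forall>x. 0 \<le> e x) \<and> (\<forall>x. e x \<le> N + 3)
     \<and> (\<integral>\<^sup>+x. ennreal (e x) \<partial>lebesgue) \<le> ennreal (\<delta> * measure lborel (ball (0::real^'n) R) + (N + 2) * \<eta>)"
proof -
  define M where "M = nat \<lceil>N / \<delta>\<rceil>"
  define E where "E j = {x. real j * \<delta> < u x}" for j :: nat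
  have E[measurable]: "E j \<in> sets lebesgue" for j
  proof -
    have "{x \<in> space lebesgue. real j * \<delta> < u x} \<in> sets lebesgue" by measurable
    then show ?thesis unfolding E_def by simp
  qed
  have Esub: "E j \<subseteq> ball 0 R" for j
    using usupp \<delta> unfolding E_def by (auto, metis mult_nonneg_nonneg of_nat_0_le_iff less_le_not_le order_less_imp_le)
  have "\<exists>V. open V \<and> E j \<subseteq> V \<and> emeasure lebesgue (V - E j) < ennreal \<eta>" for j
    using sets_lebesgue_outer_open[OF E \<eta>] by metis
  then obtain V where V: "\<And>j. open (V j)" "\<And>j. E j \<subseteq> V j" "\<And>j. emeasure lebesgue (V j - E j) < ennreal \<eta>"
    by metis
  have [measurable]: "V j \<in> sets lebesgue" for j using V(1) by (rule open_sets_lebesgue)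
  define e where "e x = \<delta> * indicator (ball 0 R) x + \<delta> * (\<Sum>j\<le>M. indicator (V j - E j) x)" for x :: "real^'n"
  have MN: "\<delta> * real M \<le> N + \<delta>"
  proof -
    have "real M \<le> N / \<delta> + 1" unfolding M_def using N \<delta> by (intro nc2) simp
    then have "\<delta> * real M \<le> \<delta> * (N / \<delta> + 1)" using \<delta> by (intro mult_left_mono) auto
    then show ?thesis using \<delta> by (simp add: distrib_left)
  qed
  have indE: "indicator (E j) x = (indicator {j. real j * \<delta> < u x} j :: real)" for j x
    unfolding E_def by (simp add: indicator_def)
  have cnt: "(\<Sum>j\<le>M. indicator (E j) x) = real (card ({..M} \<inter> {j. real j * \<delta> < u x}))" for x
  proof -
    have "real (card ({..M} \<inter> {j. real j * \<delta> < u x})) = real (\<Sum>j\<le>M. (indicator {j. real j * \<delta> < u x} j :: nat))"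
      using sum_indicator_eq_card[of "{..M}" "{j. real j * \<delta> < u x}"] by simp
    also have "\<dots> = (\<Sum>j\<le>M. indicator {j. real j * \<delta> < u x} j)"
      by (simp add: of_nat_sum indicator_def)
    finally show ?thesis unfolding indE by simp
  qed
  have low: "u x \<le> \<delta> * (\<Sum>j\<le>M. indicator (E j) x)" for x
  proof (cases "u x = 0")
    case True then show ?thesis using \<delta> by (simp add: sum_nonneg)
  next
    case False
    then have ux: "u x > 0" using u0[of x] by simp
    define k where "k = nat \<lceil>u x / \<delta>\<rceil>"
    have "{..<k} \<subseteq> {..M} \<inter> {j. real j * \<delta> < u x}"
    proof
      fix j assume "j \<in> {..<k}"
      then have "j < k" by simp
      then have "real j < u x / \<delta>" unfolding k_def by (rule nc3)
      then have jd: "real j * \<delta> < u x" using \<delta> by (simp add: field_simps)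
      have "u x / \<delta> \<le> N / \<delta>" using uN[of x] \<delta> by (simp add: divide_right_mono)
      then have "k \<le> M" unfolding k_def M_def by (intro nat_mono ceiling_mono)
      with \<open>j < k\<close> jd show "j \<in> {..M} \<inter> {j. real j * \<delta> < u x}" by simp
    qed
    then have "k \<le> card ({..M} \<inter> {j. real j * \<delta> < u x})" by (metis card_lessThan card_mono finite_Int finite_atMost)
    moreover have "u x / \<delta> \<le> real k" unfolding k_def using ux \<delta> by (intro nc1) simp
    ultimately have "u x / \<delta> \<le> (\<Sum>j\<le>M. indicator (E j) x)" unfolding cnt by linarith
    then show ?thesis using \<delta> by (simp add: field_simps)
  qed
  have up: "\<delta> * (\<Sum>j\<le>M. indicator (E j) x) \<le> u x + \<delta> * indicator (ball 0 R) x" for x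
  proof (cases "x \<in> ball 0 R")
    case False
    then have "indicator (E j) x = (0::real)" for j using Esub[of j] by (auto simp: indicator_def)
    then show ?thesis using False u0[of x] by simp
  next
    case True
    define k where "k = nat \<lceil>u x / \<delta>\<rceil>"
    have "{..M} \<inter> {j. real j * \<delta> < u x} \<subseteq> {..<k}"
    proof
      fix j assume "j \<in> {..M} \<inter> {j. real j * \<delta> < u x}"
      then have "real j * \<delta> < u x" by simp
      then have "real j < u x / \<delta>" using \<delta> by (simp add: field_simps)
      then show "j \<in> {..<k}" unfolding k_def by (simp add: nc4)
    qed
    then have "card ({..M} \<inter> {j. real j * \<delta> < u x}) \<le> k" by (metis card_lessThan card_mono finite_lessThan)
    moreover have "real k \<le> u x / \<delta> + 1" unfolding k_def using u0[of x] \<delta> by (intro nc2) simp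
    ultimately have "(\<Sum>j\<le>M. indicator (E j) x) \<le> u x / \<delta> + 1" unfolding cnt by linarith
    then have "\<delta> * (\<Sum>j\<le>M. indicator (E j) x) \<le> \<delta> * (u x / \<delta> + 1)" using \<delta> by (intro mult_left_mono) auto
    also have "\<delta> * (u x / \<delta> + 1) = u x + \<delta>" using \<delta> by (simp add: field_simps)
    finally show ?thesis using True by simp
  qed
  have VE: "(\<Sum>j\<le>M. indicator (V j) x) \<le> (\<Sum>j\<le>M. indicator (E j) x) + (\<Sum>j\<le>M. indicator (V j - E j) x :: real)" for x
    unfolding sum.distrib[symmetric] by (intro sum_mono) (auto simp: indicator_def)
  have EV: "(\<Sum>j\<le>M. indicator (E j) x) \<le> (\<Sum>j\<le>M. indicator (V j) x :: real)" for x
    using V(2) by (intro sum_mono) (auto simp: indicator_def)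
  have sum_le: "(\<Sum>j\<le>M. indicator (S j) x) \<le> real M + 1" for S :: "nat \<Rightarrow> (real^'n) set" and x
  proof -
    have "(\<Sum>j\<le>M. indicator (S j) x) \<le> (\<Sum>j\<le>M. (1::real))" by (intro sum_mono) (auto simp: indicator_def)
    then show ?thesis by simp
  qed
  show ?thesis
  proof (intro exI[of _ V] exI[of _ M] exI[of _ e] conjI allI)
    show "open (V j)" for j using V(1) .
    show "u x \<le> \<delta> * (\<Sum>j\<le>M. indicator (V j) x)" for x
      using low[of x] EV[of x] \<delta> by (meson mult_left_mono order_trans less_imp_le)
    show "e \<in> borel_measurable lebesgue" unfolding e_def by measurable
    show "\<delta> * (\<Sum>j\<le>M. indicator (V j) x) \<le> u x + e x" for x
      using up[of x] VE[of x] \<delta> unfolding e_def by (smt (verit, ccfv_SIG) mult_left_mono distrib_left)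
    show "0 \<le> e x" for x unfolding e_def using \<delta> by (simp add: sum_nonneg)
    show "e x \<le> N + 3" for x
    proof -
      have "e x \<le> \<delta> * 1 + \<delta> * (real M + 1)"
        unfolding e_def using \<delta> sum_le[of "\<lambda>j. V j - E j" x]
        by (intro add_mono mult_left_mono) (auto simp: indicator_def)
      then show ?thesis using MN \<delta> by (simp add: distrib_left)
    qed
    have pw: "ennreal (e x) = ennreal \<delta> * indicator (ball 0 R) x + (\<Sum>j\<le>M. ennreal \<delta> * indicator (V j - E j) x)" for x
    proof -
      have "(\<Sum>j\<le>M. ennreal \<delta> * indicator (V j - E j) x) = (\<Sum>j\<le>M. ennreal (\<delta> * indicator (V j - E j) x))"
        using \<delta> by (intro sum.cong) (auto simp: ennreal_mult' ennreal_indicator)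
      also have "\<dots> = ennreal (\<Sum>j\<le>M. \<delta> * indicator (V j - E j) x)"
        using \<delta> by (intro sum_ennreal) auto
      also have "\<dots> = ennreal (\<delta> * (\<Sum>j\<le>M. indicator (V j - E j) x))"
        by (simp add: sum_distrib_left)
      finally have 1: "(\<Sum>j\<le>M. ennreal \<delta> * indicator (V j - E j) x) = ennreal (\<delta> * (\<Sum>j\<le>M. indicator (V j - E j) x))" .
      have 2: "ennreal \<delta> * indicator (ball 0 R) x = ennreal (\<delta> * indicator (ball 0 R) x)"
        using \<delta> by (simp add: ennreal_mult' ennreal_indicator)
      show ?thesis unfolding 1 2 e_def using \<delta>
        by (intro ennreal_plus) (auto simp: sum_nonneg)
    qed
    have s1: "(\<integral>\<^sup>+x. (\<Sum>j\<le>M. ennreal \<delta> * indicator (V j - E j) x) \<partial>lebesgue) = (\<Sum>j\<le>M. \<integral>\<^sup>+x. ennreal \<delta> * indicator (V j - E j) x \<partial>lebesgue)"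
      by (rule nn_integral_sum) measurable
    have s2: "\<dots> = (\<Sum>j\<le>M. ennreal \<delta> * emeasure lebesgue (V j - E j))"
      by (intro sum.cong refl nn_integral_cmult_indicator) measurable
    have s3: "(\<integral>\<^sup>+x. ennreal \<delta> * indicator (ball (0::real^'n) R) x \<partial>lebesgue) = ennreal \<delta> * emeasure lebesgue (ball (0::real^'n) R)"
      by (intro nn_integral_cmult_indicator) measurable
    have "(\<integral>\<^sup>+x. ennreal (e x) \<partial>lebesgue) = (\<integral>\<^sup>+x. ennreal \<delta> * indicator (ball (0::real^'n) R) x + (\<Sum>j\<le>M. ennreal \<delta> * indicator (V j - E j) x) \<partial>lebesgue)"
      using pw by simp
    also have "\<dots> = (\<integral>\<^sup>+x. ennreal \<delta> * indicator (ball (0::real^'n) R) x \<partial>lebesgue) + (\<integral>\<^sup>+x. (\<Sum>j\<le>M. ennreal \<delta> * indicator (V j - E j) x) \<partial>lebesgue)"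
      by (rule nn_integral_add) measurable
    also have "\<dots> = ennreal \<delta> * emeasure lebesgue (ball (0::real^'n) R) + (\<Sum>j\<le>M. ennreal \<delta> * emeasure lebesgue (V j - E j))"
      unfolding s1 s2 s3 ..
    also have "\<dots> \<le> ennreal \<delta> * emeasure lebesgue (ball (0::real^'n) R) + (\<Sum>j\<le>M. ennreal \<delta> * ennreal \<eta>)"
      using V(3) by (intro add_left_mono sum_mono mult_left_mono) (auto intro: less_imp_le)
    also have "\<dots> = ennreal (\<delta> * measure lborel (ball (0::real^'n) R) + \<delta> * (real M + 1) * \<eta>)"
    proof -
      have "(\<Sum>j\<le>M. ennreal \<delta> * ennreal \<eta>) = of_nat (Suc M) * ennreal (\<delta> * \<eta>)"
        using \<delta> \<eta> by (simp add: ennreal_mult)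
      also have "of_nat (Suc M) = ennreal (real M + 1)"
        by (metis ennreal_of_nat_eq_real_of_nat of_nat_Suc add.commute)
      also have "ennreal (real M + 1) * ennreal (\<delta> * \<eta>) = ennreal ((real M + 1) * (\<delta> * \<eta>))"
        using \<delta> \<eta> by (intro ennreal_mult[symmetric]) auto
      also have "(real M + 1) * (\<delta> * \<eta>) = \<delta> * (real M + 1) * \<eta>" by (simp add: mult_ac)
      finally have 1: "(\<Sum>j\<le>M. ennreal \<delta> * ennreal \<eta>) = ennreal (\<delta> * (real M + 1) * \<eta>)" .
      have 2: "ennreal \<delta> * emeasure lebesgue (ball (0::real^'n) R) = ennreal (\<delta> * measure lborel (ball (0::real^'n) R))"
        using \<delta> by (simp add: emeasure_ball_eq ennreal_mult)
      show ?thesis unfolding 1 2 using \<delta> \<eta> by (intro ennreal_plus[symmetric]) auto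
    qed
    also have "\<dots> \<le> ennreal (\<delta> * measure lborel (ball (0::real^'n) R) + (N + 2) * \<eta>)"
    proof (intro ennreal_leI add_left_mono mult_right_mono)
      show "\<delta> * (real M + 1) \<le> N + 2" using MN \<delta> by (simp add: distrib_left)
    qed (use \<eta> in auto)
    finally show "(\<integral>\<^sup>+x. ennreal (e x) \<partial>lebesgue) \<le> ennreal (\<delta> * measure lborel (ball (0::real^'n) R) + (N + 2) * \<eta>)" .
  qed
qed

lemma Cs_pos:
  fixes \<phi> :: "real \<Rightarrow> real"
  assumes phipos: "\<And>r. r > 0 \<Longrightarrow> \<phi> r > 0"
    and sub: "\<And>r s. r > 0 \<Longrightarrow> s > 0 \<Longrightarrow> \<phi> (r * s) \<le> Cs * \<phi> r * \<phi> s"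
  shows "Cs > 0"
proof -
  have p1: "\<phi> 1 > 0" using phipos by simp
  have "\<phi> 1 * 1 \<le> \<phi> 1 * (Cs * \<phi> 1)" using sub[of 1 1] by (simp add: mult_ac)
  then have "1 \<le> Cs * \<phi> 1" using p1 by (simp add: mult_le_cancel_left)
  then have "0 < Cs * \<phi> 1" by simp
  then show ?thesis using p1 by (simp add: zero_less_mult_iff)
qed

lemma in_morrey_space:
  assumes "f \<in> borel_measurable lebesgue" "morrey_norm \<phi> q f \<le> ennreal M"
  shows "f \<in> morrey_space \<phi> q"
  using assms unfolding morrey_space_def by (auto simp: le_less_trans)

lemma transfer:
  fixes \<psi> :: "real^'n \<Rightarrow> real^'n" and G :: "real^'n \<Rightarrow> real"
  assumes phipos: "\<And>r. r > 0 \<Longrightarrow> \<phi> r > 0"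
    and sub: "\<And>r s. r > 0 \<Longrightarrow> s > 0 \<Longrightarrow> \<phi> (r * s) \<le> Cs * \<phi> r * \<phi> s"
    and inv: "\<And>t. t > 0 \<Longrightarrow> \<phi> t * \<phi> (1/t) \<le> Ci"
    and q: "0 < q"
    and bnd: "\<And>g. g \<in> morrey_space \<phi> q \<Longrightarrow> g \<circ> \<psi> \<in> morrey_space \<phi> q \<and> morrey_norm \<phi> q (g \<circ> \<psi>) \<le> ennreal Cp * morrey_norm \<phi> q g"
    and Cp: "0 \<le> Cp"
    and G[measurable]: "G \<in> borel_measurable lebesgue" and MG: "0 \<le> MG" and GM: "morrey_norm \<phi> q G \<le> ennreal MG"
    and t: "t > 0"
  shows "morrey_norm \<phi> q (\<lambda>y. G ((1/t) *\<^sub>R (\<psi> (x0 + t *\<^sub>R y) - \<psi> x0))) \<le> ennreal (Cs * Cs * Cp * Ci * MG)"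
proof -
  have Cs: "Cs > 0" using Cs_pos[OF phipos sub] .
  define c where "c = - ((1/t) *\<^sub>R \<psi> x0)"
  define g where "g = (\<lambda>z. G (c + (1/t) *\<^sub>R z))"
  have t1: "1/t > 0" using t by simp
  have gm[measurable]: "g \<in> borel_measurable lebesgue"
    unfolding g_def using measurable_compose[OF lebesgue_affine_scale(2)[OF t1, of c] G] by (simp add: o_def)
  have ng: "morrey_norm \<phi> q g \<le> ennreal (Cs * \<phi> (1/t) * MG)"
    unfolding g_def by (rule morrey_norm_affine[where \<phi>=\<phi>, OF phipos sub q G MG GM t1])
  have gs: "g \<in> morrey_space \<phi> q" using in_morrey_space[OF gm ng] .
  have g2: "g \<circ> \<psi> \<in> morrey_space \<phi> q" and ng2: "morrey_norm \<phi> q (g \<circ> \<psi>) \<le> ennreal Cp * morrey_norm \<phi> q g"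
    using bnd[OF gs] by auto
  have U: "0 \<le> Cp * (Cs * \<phi> (1/t) * MG)" using Cp Cs phipos[OF t1] MG by simp
  have ng2': "morrey_norm \<phi> q (g \<circ> \<psi>) \<le> ennreal (Cp * (Cs * \<phi> (1/t) * MG))"
  proof -
    have "ennreal Cp * morrey_norm \<phi> q g \<le> ennreal Cp * ennreal (Cs * \<phi> (1/t) * MG)"
      using ng by (intro mult_left_mono) auto
    moreover have "ennreal Cp * ennreal (Cs * \<phi> (1/t) * MG) = ennreal (Cp * (Cs * \<phi> (1/t) * MG))"
      using Cp by (simp add: ennreal_mult')
    ultimately show ?thesis using ng2 by (metis order_trans)
  qed
  have gpm[measurable]: "g \<circ> \<psi> \<in> borel_measurable lebesgue" using g2 unfolding morrey_space_def by simp
  have n3: "morrey_norm \<phi> q (\<lambda>y. (g \<circ> \<psi>) (x0 + t *\<^sub>R y)) \<le> ennreal (Cs * \<phi> t * (Cp * (Cs * \<phi> (1/t) * MG)))"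
    by (rule morrey_norm_affine[where \<phi>=\<phi>, OF phipos sub q gpm U ng2' t])
  have "Cs * \<phi> t * (Cp * (Cs * \<phi> (1/t) * MG)) = Cs * Cs * Cp * MG * (\<phi> t * \<phi> (1/t))" by (simp add: mult_ac)
  also have "\<dots> \<le> Cs * Cs * Cp * MG * Ci" using inv[OF t] Cs Cp MG by (intro mult_left_mono) auto
  finally have le: "Cs * \<phi> t * (Cp * (Cs * \<phi> (1/t) * MG)) \<le> Cs * Cs * Cp * Ci * MG" by (simp add: mult_ac)
  have feq: "(\<lambda>y. (g \<circ> \<psi>) (x0 + t *\<^sub>R y)) = (\<lambda>y. G ((1/t) *\<^sub>R (\<psi> (x0 + t *\<^sub>R y) - \<psi> x0)))"
    unfolding g_def c_def by (simp add: scaleR_diff_right)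
  show ?thesis using n3 le unfolding feq by (meson ennreal_leI order_trans)
qed

lemma pow_sum_le:
  fixes x y q :: real assumes "0 \<le> x" "0 \<le> y" "0 < q"
  shows "(x + y) powr q \<le> 2 powr q * (x powr q + y powr q)"
proof -
  have "(x + y) powr q \<le> (2 * max x y) powr q" using assms by (intro powr_mono2) auto
  also have "\<dots> = 2 powr q * (max x y) powr q" using assms by (simp add: powr_mult)
  also have "(max x y) powr q \<le> x powr q + y powr q" by (cases "x \<le> y") (auto simp: max_def)
  then have "2 powr q * (max x y) powr q \<le> 2 powr q * (x powr q + y powr q)" by (intro mult_left_mono) auto
  finally show ?thesis .
qed

lemma quot_tendsto:
  fixes \<psi> :: "real^'n \<Rightarrow> real^'n"
  assumes D: "(\<psi> has_derivative A) (at x0)"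
  shows "(\<lambda>k. (real k + 1) *\<^sub>R (\<psi> (x0 + (1 / (real k + 1)) *\<^sub>R y) - \<psi> x0)) \<longlonglongrightarrow> A y"
proof (rule LIMSEQ_I)
  fix r :: real assume r: "r > 0"
  have bl: "bounded_linear A" and lim: "\<forall>e>0. \<exists>d>0. \<forall>z. norm (z - x0) < d \<longrightarrow> norm (\<psi> z - \<psi> x0 - A (z - x0)) \<le> e * norm (z - x0)"
    using D unfolding has_derivative_at_alt by auto
  define e where "e = r / (2 * (norm y + 1))"
  have pos: "2 * (norm y + 1) > 0" by (simp add: add_pos_nonneg add_nonneg_pos)
  then have e: "e > 0" unfolding e_def using r by (simp add: divide_pos_pos)
  obtain d where d: "d > 0" "\<And>z. norm (z - x0) < d \<Longrightarrow> norm (\<psi> z - \<psi> x0 - A (z - x0)) \<le> e * norm (z - x0)"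
    using lim e by blast
  define no where "no = nat \<lceil>norm y / d\<rceil>"
  show "\<exists>no. \<forall>n\<ge>no. norm ((real n + 1) *\<^sub>R (\<psi> (x0 + (1 / (real n + 1)) *\<^sub>R y) - \<psi> x0) - A y) < r"
  proof (intro exI[of _ no] allI impI)
    fix n assume n: "no \<le> n"
    define t where "t = 1 / (real n + 1)"
    have t: "t > 0" unfolding t_def by simp
    have "norm y / d \<le> real no" unfolding no_def using d by (intro nc1) simp
    also have "\<dots> < real n + 1" using n by simp
    finally have "norm y < d * (real n + 1)" using d by (simp add: field_simps)
    then have small: "norm ((x0 + t *\<^sub>R y) - x0) < d" unfolding t_def using d by (simp add: field_simps)
    have lin: "A (t *\<^sub>R y) = t *\<^sub>R A y" using bl by (simp add: linear_simps)
    have "(real n + 1) *\<^sub>R (\<psi> (x0 + (1 / (real n + 1)) *\<^sub>R y) - \<psi> x0) - A y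
        = (1/t) *\<^sub>R (\<psi> (x0 + t *\<^sub>R y) - \<psi> x0 - A ((x0 + t *\<^sub>R y) - x0))"
      unfolding t_def using lin[unfolded t_def] by (simp add: scaleR_diff_right)
    then have "norm ((real n + 1) *\<^sub>R (\<psi> (x0 + (1 / (real n + 1)) *\<^sub>R y) - \<psi> x0) - A y)
        = (1/t) * norm (\<psi> (x0 + t *\<^sub>R y) - \<psi> x0 - A ((x0 + t *\<^sub>R y) - x0))"
      using t by simp
    also have "\<dots> \<le> (1/t) * (e * norm ((x0 + t *\<^sub>R y) - x0))"
      using d(2)[OF small] t by (intro mult_left_mono) auto
    also have "\<dots> = e * norm y" using t by simp
    also have "\<dots> < r"
    proof -
      have "e * norm y = r * (norm y / (2 * (norm y + 1)))" unfolding e_def by simp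
      also have "norm y / (2 * (norm y + 1)) < 1" using pos by (subst divide_less_eq_1_pos) auto
      then have "r * (norm y / (2 * (norm y + 1))) < r * 1" using r by (intro mult_strict_left_mono) auto
      finally show ?thesis by simp
    qed
    finally show "norm ((real n + 1) *\<^sub>R (\<psi> (x0 + (1 / (real n + 1)) *\<^sub>R y) - \<psi> x0) - A y) < r" .
  qed
qed

lemma step_comp_measurable:
  fixes g :: "real^'n \<Rightarrow> real^'n" and \<delta> :: real
  assumes V: "\<And>j. open (V j)" and g: "continuous_on UNIV g"
  shows "(\<lambda>y. \<delta> * (\<Sum>j\<le>(M::nat). indicator (V j) (g y))) \<in> borel_measurable lebesgue"
proof -
  define W where "W j = g -` V j" for j
  have o: "open (W j)" for j unfolding W_def using continuous_on_open_vimage[of UNIV g] V g by simp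
  have [measurable]: "W j \<in> sets lebesgue" for j using open_sets_lebesgue[OF o] .
  have "(\<lambda>y. \<delta> * (\<Sum>j\<le>M. indicator (V j) (g y))) = (\<lambda>y. \<delta> * (\<Sum>j\<le>M. indicator (W j) y))"
    unfolding W_def by (simp add: indicator_def)
  also have "\<dots> \<in> borel_measurable lebesgue" by measurable
  finally show ?thesis .
qed

lemma fatou_step:
  fixes \<Phi> :: "nat \<Rightarrow> real^'n \<Rightarrow> real^'n" and A :: "real^'n \<Rightarrow> real^'n"
  assumes V: "\<And>j. open (V j)" and \<delta>: "\<delta> > 0" and q: "q > 0"
    and cont: "\<And>k. continuous_on UNIV (\<Phi> k)" and contA: "continuous_on UNIV A"
    and conv: "\<And>y. (\<lambda>k. \<Phi> k y) \<longlonglongrightarrow> A y"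
    and bound: "\<And>k. ballint q (\<lambda>y. \<delta> * (\<Sum>j\<le>(M::nat). indicator (V j) (\<Phi> k y))) a r \<le> X"
  shows "ballint q (\<lambda>y. \<delta> * (\<Sum>j\<le>M. indicator (V j) (A y))) a r \<le> X"
proof -
  define F where "F = (\<lambda>x. \<delta> * (\<Sum>j\<le>M. indicator (V j) x :: real))"
  have F0: "0 \<le> F x" for x unfolding F_def using \<delta> by (simp add: sum_nonneg)
  have mk[measurable]: "(\<lambda>y. F (\<Phi> k y)) \<in> borel_measurable lebesgue" for k
    unfolding F_def by (rule step_comp_measurable[OF V cont])
  define h where "h k y = ennreal (\<bar>F (\<Phi> k y)\<bar> powr q) * indicator (ball a r) y" for k y
  have hm: "h k \<in> borel_measurable lebesgue" for k unfolding h_def by measurable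
  have pt: "ennreal (\<bar>F (A y)\<bar> powr q) * indicator (ball a r) y \<le> liminf (\<lambda>k. h k y)" for y
  proof (rule Liminf_bounded)
    have "\<forall>j\<in>{..M}. eventually (\<lambda>k. A y \<in> V j \<longrightarrow> \<Phi> k y \<in> V j) sequentially"
    proof
      fix j assume "j \<in> {..M}"
      show "eventually (\<lambda>k. A y \<in> V j \<longrightarrow> \<Phi> k y \<in> V j) sequentially"
      proof (cases "A y \<in> V j")
        case True
        then show ?thesis using topological_tendstoD[OF conv V] by (auto elim: eventually_mono)
      qed simp
    qed
    then have "eventually (\<lambda>k. \<forall>j\<in>{..M}. A y \<in> V j \<longrightarrow> \<Phi> k y \<in> V j) sequentially"
      by (intro eventually_ball_finite) auto
    then show "eventually (\<lambda>k. ennreal (\<bar>F (A y)\<bar> powr q) * indicator (ball a r) y \<le> h k y) sequentially"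
    proof (rule eventually_mono)
      fix k assume H: "\<forall>j\<in>{..M}. A y \<in> V j \<longrightarrow> \<Phi> k y \<in> V j"
      have "F (A y) \<le> F (\<Phi> k y)" unfolding F_def using \<delta> H
        by (intro mult_left_mono sum_mono) (auto simp: indicator_def)
      then have "\<bar>F (A y)\<bar> powr q \<le> \<bar>F (\<Phi> k y)\<bar> powr q" using F0 q by (intro powr_mono2) auto
      then show "ennreal (\<bar>F (A y)\<bar> powr q) * indicator (ball a r) y \<le> h k y"
        unfolding h_def by (intro mult_right_mono ennreal_leI) auto
    qed
  qed
  have "ballint q (\<lambda>y. F (A y)) a r \<le> (\<integral>\<^sup>+y. liminf (\<lambda>k. h k y) \<partial>lebesgue)"
    unfolding ballint_def by (intro nn_integral_mono pt)
  also have "\<dots> \<le> liminf (\<lambda>k. integral\<^sup>N lebesgue (h k))"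
    by (rule nn_integral_liminf[OF hm])
  also have "\<dots> \<le> limsup (\<lambda>k. integral\<^sup>N lebesgue (h k))"
    by (rule Liminf_le_Limsup) simp
  also have "\<dots> \<le> X"
  proof (rule Limsup_bounded, rule always_eventually, rule allI)
    fix k
    have "integral\<^sup>N lebesgue (h k) = ballint q (\<lambda>y. \<delta> * (\<Sum>j\<le>(M::nat). indicator (V j) (\<Phi> k y))) a r"
      unfolding h_def ballint_def F_def by simp
    then show "integral\<^sup>N lebesgue (h k) \<le> X" using bound[of k] by simp
  qed
  finally show ?thesis unfolding F_def .
qed

lemma choose_delta:
  fixes N mR m1 Cg q p \<epsilon> :: real
  assumes N: "0 \<le> N" and mR: "0 \<le> mR" and m1: "0 < m1" and Cg: "0 < Cg" and q: "1 \<le> q" and qp: "q \<le> p" and \<epsilon>: "0 < \<epsilon>"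
  shows "\<exists>\<delta>. 0 < \<delta> \<and> \<delta> \<le> 1 \<and>
    ((N + 3) powr q) powr (1 - q/p) * ((N + 3) powr (q - 1) * (\<delta> * mR + (N + 2) * \<delta>)) powr (q/p)
      * m1 powr (- (q/p)) * Cg powr q \<le> \<epsilon>"
proof -
  define \<theta> where "\<theta> = q / p"
  have th: "0 < \<theta>" "\<theta> \<le> 1" using q qp unfolding \<theta>_def by auto
  define K0 where "K0 = ((N + 3) powr q) powr (1 - \<theta>) * m1 powr (- \<theta>) * Cg powr q"
  define Kb where "Kb = (N + 3) powr (q - 1) * (mR + (N + 2))"
  have K0: "K0 > 0" unfolding K0_def using N m1 Cg by simp
  have Kb: "Kb > 0" unfolding Kb_def using N mR by (simp add: add_nonneg_pos)
  define \<delta> where "\<delta> = min 1 ((\<epsilon> / K0) powr (1 / \<theta>) / Kb)"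
  have d0: "0 < \<delta>" unfolding \<delta>_def using \<epsilon> K0 Kb by simp
  have d1: "\<delta> \<le> 1" unfolding \<delta>_def by simp
  have "Kb * \<delta> \<le> (\<epsilon> / K0) powr (1 / \<theta>)"
    unfolding \<delta>_def using Kb by (simp add: min_def field_simps)
  then have "(Kb * \<delta>) powr \<theta> \<le> ((\<epsilon> / K0) powr (1 / \<theta>)) powr \<theta>"
    using Kb d0 th by (intro powr_mono2) auto
  also have "\<dots> = \<epsilon> / K0" using th \<epsilon> K0 by (simp add: powr_powr)
  finally have 1: "K0 * (Kb * \<delta>) powr \<theta> \<le> \<epsilon>" using K0 by (simp add: field_simps)
  have eq: "((N + 3) powr (q - 1) * (\<delta> * mR + (N + 2) * \<delta>)) = Kb * \<delta>"
    unfolding Kb_def by (simp add: algebra_simps)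
  have "((N + 3) powr q) powr (1 - q/p) * ((N + 3) powr (q - 1) * (\<delta> * mR + (N + 2) * \<delta>)) powr (q/p)
      * m1 powr (- (q/p)) * Cg powr q \<le> \<epsilon>"
    using 1 unfolding eq \<theta>_def[symmetric] K0_def by (simp add: mult_ac)
  then show ?thesis using d0 d1 by blast
qed

lemma powq_le_lin:
  fixes x a q :: real assumes "0 \<le> x" "x \<le> a" "1 \<le> q"
  shows "x powr q \<le> a powr (q - 1) * x"
proof (cases "x = 0")
  case True then show ?thesis by simp
next
  case False
  then have x: "x > 0" using assms by simp
  have "x powr (q - 1) * x = x powr (q - 1) * x powr 1" using x by simp
  also have "\<dots> = x powr (q - 1 + 1)" by (rule powr_add[symmetric])
  finally have "x powr q = x powr (q - 1) * x" by simp
  also have "\<dots> \<le> a powr (q - 1) * x" using assms x by (intro mult_right_mono powr_mono2) auto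
  finally show ?thesis .
qed

lemma core:
  fixes \<psi> A :: "real^'n \<Rightarrow> real^'n" and u :: "real^'n \<Rightarrow> real" and \<phi> :: "real \<Rightarrow> real"
  assumes phipos: "\<And>r. r > 0 \<Longrightarrow> \<phi> r > 0"
    and sub: "\<And>r s. r > 0 \<Longrightarrow> s > 0 \<Longrightarrow> \<phi> (r * s) \<le> Cs * \<phi> r * \<phi> s"
    and inv: "\<And>t. t > 0 \<Longrightarrow> \<phi> t * \<phi> (1/t) \<le> Ci"
    and growth: "\<And>r. r > 0 \<Longrightarrow> r powr (- real CARD('n) / p) \<le> Cg * \<phi> r" and Cg: "Cg > 0"
    and q: "1 \<le> q" and qp: "q \<le> p"
    and bnd: "\<And>g. g \<in> morrey_space \<phi> q \<Longrightarrow> g \<circ> \<psi> \<in> morrey_space \<phi> q \<and> morrey_norm \<phi> q (g \<circ> \<psi>) \<le> ennreal Cp * morrey_norm \<phi> q g"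
    and Cp: "0 \<le> Cp"
    and D: "(\<psi> has_derivative A) (at x0)" and cpsi: "continuous_on UNIV \<psi>" and linA: "linear A"
    and u[measurable]: "u \<in> borel_measurable lebesgue" and u0: "\<And>x. 0 \<le> u x" and uN: "\<And>x. u x \<le> N"
    and usupp: "\<And>x. x \<notin> ball 0 N \<Longrightarrow> u x = 0" and N: "0 \<le> N"
    and U: "0 \<le> U" and uU: "morrey_norm \<phi> q u \<le> ennreal U" and r: "r > 0"
  shows "ballint q (\<lambda>y. u (A y)) a r \<le> ennreal ((\<phi> r * (2 * (Cs * Cs * Cp * Ci) * U)) powr q * measure lborel (ball a r))"
proof -
  define C3 where "C3 = Cs * Cs * Cp * Ci"
  have Cs: "Cs > 0" using Cs_pos[OF phipos sub] .
  have Ci: "Ci > 0"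
  proof -
    have "\<phi> 1 * \<phi> 1 \<le> Ci" using inv[of 1] by simp
    moreover have "\<phi> 1 > 0" using phipos by simp
    ultimately show ?thesis by (smt (verit) mult_pos_pos)
  qed
  have C3: "C3 \<ge> 0" unfolding C3_def using Cs Ci Cp by simp
  have q0: "0 < q" using q by simp
  define m where "m = measure lborel (ball a r)"
  have m: "m > 0" unfolding m_def using content_ball_pos[OF r] by simp
  define mR where "mR = measure lborel (ball (0::real^'n) N)"
  have mR: "mR \<ge> 0" unfolding mR_def by simp
  define m1 where "m1 = measure lborel (ball (0::real^'n) 1)"
  have m1: "m1 > 0" unfolding m1_def using content_ball_pos[of 1] by simp
  have phr: "\<phi> r > 0" using phipos[OF r] .
  define base where "base = (\<phi> r * (2 * C3 * U)) powr q * m"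
  define c where "c = \<phi> r powr q * C3 powr q * 2 powr q * m"
  have c: "c \<ge> 0" unfolding c_def using m by simp
  have base_eq: "base = \<phi> r powr q * C3 powr q * 2 powr q * U powr q * m"
    unfolding base_def using phr C3 U by (simp add: powr_mult mult_ac)
  have "ballint q (\<lambda>y. u (A y)) a r \<le> ennreal base"
  proof (rule ennreal_le_epsilon)
    fix \<epsilon>' :: real assume \<epsilon>': "0 < \<epsilon>'"
    define \<epsilon> where "\<epsilon> = \<epsilon>' / (c + 1)"
    have \<epsilon>: "\<epsilon> > 0" unfolding \<epsilon>_def using \<epsilon>' c by simp
    have c\<epsilon>: "c * \<epsilon> \<le> \<epsilon>'"
    proof -
      have "c * \<epsilon> \<le> (c + 1) * \<epsilon>" using \<epsilon> by (simp add: mult_right_mono)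
      also have "\<dots> = \<epsilon>'" unfolding \<epsilon>_def using c by simp
      finally show ?thesis .
    qed
    obtain \<delta> where \<delta>: "0 < \<delta>" "\<delta> \<le> 1" and Keps:
      "((N + 3) powr q) powr (1 - q/p) * ((N + 3) powr (q - 1) * (\<delta> * mR + (N + 2) * \<delta>)) powr (q/p)
        * m1 powr (- (q/p)) * Cg powr q \<le> \<epsilon>"
      using choose_delta[OF N mR m1 Cg q qp \<epsilon>] by blast
    define b where "b = (N + 3) powr (q - 1) * (\<delta> * mR + (N + 2) * \<delta>)"
    define Ke where "Ke = ((N + 3) powr q) powr (1 - q/p) * b powr (q/p) * m1 powr (- (q/p)) * Cg powr q"
    have Ke: "Ke \<le> \<epsilon>" "0 \<le> Ke" unfolding Ke_def b_def using Keps by simp_all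
    obtain V M e where V: "\<And>j. open (V j)" and uF: "\<And>x. u x \<le> \<delta> * (\<Sum>j\<le>(M::nat). indicator (V j) x)"
      and em[measurable]: "e \<in> borel_measurable lebesgue" and Fue: "\<And>x. \<delta> * (\<Sum>j\<le>M. indicator (V j) x) \<le> u x + e x"
      and e0: "\<And>x. 0 \<le> e x" and eN: "\<And>x. e x \<le> N + 3"
      and eint: "(\<integral>\<^sup>+x. ennreal (e x) \<partial>lebesgue) \<le> ennreal (\<delta> * mR + (N + 2) * \<delta>)"
      using majorant[OF u u0 uN usupp \<delta>(1) \<delta>(2) \<delta>(1) N] unfolding mR_def by blast
    have b0: "0 \<le> b" unfolding b_def using \<delta> mR N by simp
    have eq_int: "(\<integral>\<^sup>+x. ennreal (\<bar>e x\<bar> powr q) \<partial>lebesgue) \<le> ennreal b"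
    proof -
      have "(\<integral>\<^sup>+x. ennreal (\<bar>e x\<bar> powr q) \<partial>lebesgue) \<le> (\<integral>\<^sup>+x. ennreal ((N + 3) powr (q - 1)) * ennreal (e x) \<partial>lebesgue)"
      proof (intro nn_integral_mono)
        fix x
        have "\<bar>e x\<bar> powr q \<le> (N + 3) powr (q - 1) * e x" using powq_le_lin[OF e0 eN q] e0[of x] by simp
        then show "ennreal (\<bar>e x\<bar> powr q) \<le> ennreal ((N + 3) powr (q - 1)) * ennreal (e x)"
          using ennreal_mult'[of "(N+3) powr (q-1)" "e x"] ennreal_leI by (metis powr_ge_zero)
      qed
      also have "\<dots> = ennreal ((N + 3) powr (q - 1)) * (\<integral>\<^sup>+x. ennreal (e x) \<partial>lebesgue)"
        by (rule nn_integral_cmult) simp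
      also have "\<dots> \<le> ennreal ((N + 3) powr (q - 1)) * ennreal (\<delta> * mR + (N + 2) * \<delta>)"
        using eint by (intro mult_left_mono) auto
      also have "\<dots> = ennreal b" unfolding b_def by (simp add: ennreal_mult'[symmetric])
      finally show ?thesis .
    qed
    have sm: "\<forall>x. \<forall>r>0. ballint q e x r \<le> ennreal (\<phi> r powr q * Ke * measure lborel (ball x r))"
      using small_morrey[where \<phi>=\<phi>, OF phipos growth Cg q qp em _ _ b0 eq_int, of "N + 3"] e0 eN N
      unfolding Ke_def m1_def by simp
    have uB: "\<forall>x. \<forall>r>0. ballint q u x r \<le> ennreal ((\<phi> r * U) powr q * measure lborel (ball x r))"
      using morrey_le_iff[where \<phi>=\<phi>, OF phipos q0 U] uU by blast
    define F where "F = (\<lambda>x. \<delta> * (\<Sum>j\<le>M. indicator (V j) x :: real))"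
    have Fm[measurable]: "F \<in> borel_measurable lebesgue"
      using step_comp_measurable[OF V continuous_on_id, where \<delta>=\<delta> and M=M] unfolding F_def by simp
    have F0: "0 \<le> F x" for x unfolding F_def using \<delta> by (simp add: sum_nonneg)
    define MF where "MF = (2 powr q * (U powr q + Ke)) powr (1/q)"
    have MF0: "0 \<le> MF" unfolding MF_def by simp
    have MFq: "MF powr q = 2 powr q * (U powr q + Ke)"
      unfolding MF_def using q0 Ke by (simp add: powr_powr)
    have FB: "morrey_norm \<phi> q F \<le> ennreal MF"
    proof -
      have "\<forall>x. \<forall>r'>0. ballint q F x r' \<le> ennreal ((\<phi> r' * MF) powr q * measure lborel (ball x r'))"
      proof (intro allI impI)
        fix x :: "real^'n" and r' :: real assume r': "r' > 0"
        define m' where "m' = measure lborel (ball x r')"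
        have ph': "\<phi> r' > 0" using phipos[OF r'] .
        have "ballint q F x r' \<le> (\<integral>\<^sup>+y. ennreal (2 powr q) * (ennreal (\<bar>u y\<bar> powr q) * indicator (ball x r') y + ennreal (\<bar>e y\<bar> powr q) * indicator (ball x r') y) \<partial>lebesgue)"
          unfolding ballint_def
        proof (intro nn_integral_mono)
          fix y
          have "\<bar>F y\<bar> powr q \<le> (u y + e y) powr q"
            using Fue[of y] F0[of y] q0 unfolding F_def by (intro powr_mono2) auto
          also have "\<dots> \<le> 2 powr q * (u y powr q + e y powr q)" using pow_sum_le[OF u0 e0 q0] .
          finally have "\<bar>F y\<bar> powr q \<le> 2 powr q * (\<bar>u y\<bar> powr q + \<bar>e y\<bar> powr q)" using u0[of y] e0[of y] by simp
          then show "ennreal (\<bar>F y\<bar> powr q) * indicator (ball x r') y \<le> ennreal (2 powr q) * (ennreal (\<bar>u y\<bar> powr q) * indicator (ball x r') y + ennreal (\<bar>e y\<bar> powr q) * indicator (ball x r') y)"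
            by (auto simp: indicator_def ennreal_mult'[symmetric] ennreal_plus[symmetric] simp del: ennreal_plus intro!: ennreal_leI)
        qed
        also have "\<dots> = ennreal (2 powr q) * (ballint q u x r' + ballint q e x r')"
          unfolding ballint_def by (subst nn_integral_cmult) (auto simp: nn_integral_add)
        also have "\<dots> \<le> ennreal (2 powr q) * (ennreal ((\<phi> r' * U) powr q * m') + ennreal (\<phi> r' powr q * Ke * m'))"
          using uB sm r' unfolding m'_def by (intro mult_left_mono add_mono) auto
        also have "\<dots> = ennreal ((\<phi> r' * MF) powr q * m')"
        proof -
          have "(\<phi> r' * MF) powr q * m' = 2 powr q * ((\<phi> r' * U) powr q * m' + \<phi> r' powr q * Ke * m')"
            using ph' MF0 U by (simp add: powr_mult MFq algebra_simps)
          then show ?thesis using ph' U Ke m'_def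
            by (simp add: ennreal_mult'[symmetric] ennreal_plus[symmetric] del: ennreal_plus)
        qed
        finally show "ballint q F x r' \<le> ennreal ((\<phi> r' * MF) powr q * measure lborel (ball x r'))"
          unfolding m'_def .
      qed
      then show ?thesis using morrey_le_iff[where \<phi>=\<phi>, OF phipos q0 MF0] by blast
    qed
    define \<Phi> where "\<Phi> k y = (real k + 1) *\<^sub>R (\<psi> (x0 + (1 / (real k + 1)) *\<^sub>R y) - \<psi> x0)" for k :: nat and y
    have hk: "ballint q (\<lambda>y. \<delta> * (\<Sum>j\<le>M. indicator (V j) (\<Phi> k y))) a r \<le> ennreal ((\<phi> r * (C3 * MF)) powr q * m)" for k
    proof -
      define t where "t = 1 / (real k + 1)"
      have t: "t > 0" unfolding t_def by simp
      have "morrey_norm \<phi> q (\<lambda>y. F ((1/t) *\<^sub>R (\<psi> (x0 + t *\<^sub>R y) - \<psi> x0))) \<le> ennreal (Cs * Cs * Cp * Ci * MF)"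
        by (rule transfer[where \<phi>=\<phi>, OF phipos sub inv q0 bnd Cp Fm MF0 FB t])
      moreover have "(\<lambda>y. F ((1/t) *\<^sub>R (\<psi> (x0 + t *\<^sub>R y) - \<psi> x0))) = (\<lambda>y. \<delta> * (\<Sum>j\<le>M. indicator (V j) (\<Phi> k y)))"
        unfolding F_def \<Phi>_def t_def by simp
      ultimately have "morrey_norm \<phi> q (\<lambda>y. \<delta> * (\<Sum>j\<le>M. indicator (V j) (\<Phi> k y))) \<le> ennreal (C3 * MF)"
        unfolding C3_def by (simp add: mult_ac)
      moreover have "0 \<le> C3 * MF" using C3 MF0 by simp
      ultimately show ?thesis using morrey_le_iff[where \<phi>=\<phi>, OF phipos q0] r unfolding m_def by blast
    qed
    have contPhi: "continuous_on UNIV (\<Phi> k)" for k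
      unfolding \<Phi>_def by (intro continuous_intros continuous_on_compose2[OF cpsi]) auto
    have contA: "continuous_on UNIV A" using linA by (simp add: linear_continuous_on linear_linear)
    have conv: "(\<lambda>k. \<Phi> k y) \<longlonglongrightarrow> A y" for y unfolding \<Phi>_def by (rule quot_tendsto[OF D])
    have FA: "ballint q (\<lambda>y. \<delta> * (\<Sum>j\<le>M. indicator (V j) (A y))) a r \<le> ennreal ((\<phi> r * (C3 * MF)) powr q * m)"
      by (rule fatou_step[OF V \<delta>(1) q0 contPhi contA conv hk])
    have "ballint q (\<lambda>y. u (A y)) a r \<le> ballint q (\<lambda>y. \<delta> * (\<Sum>j\<le>M. indicator (V j) (A y))) a r"
      unfolding ballint_def
    proof (intro nn_integral_mono mult_right_mono ennreal_leI)
      fix y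
      show "\<bar>u (A y)\<bar> powr q \<le> \<bar>\<delta> * (\<Sum>j\<le>M. indicator (V j) (A y))\<bar> powr q"
        using u0[of "A y"] uF[of "A y"] q0 by (intro powr_mono2) auto
    qed simp
    also note FA
    also have "(\<phi> r * (C3 * MF)) powr q * m = base + c * Ke"
      unfolding base_eq c_def using phr C3 MF0 by (simp add: powr_mult MFq algebra_simps)
    also have "ennreal (base + c * Ke) \<le> ennreal (base + \<epsilon>')"
      using mult_left_mono[OF Ke(1) c] c\<epsilon> by (intro ennreal_leI) simp
    also have "\<dots> = ennreal base + ennreal \<epsilon>'"
      using \<epsilon>' base_eq m phr C3 U by (intro ennreal_plus) auto
    finally show "ballint q (\<lambda>y. u (A y)) a r \<le> ennreal base + ennreal \<epsilon>'" .
  qed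
  then show ?thesis unfolding base_def m_def C3_def .
qed

lemma trunc_sup:
  fixes f :: "real^'n \<Rightarrow> real" and A :: "real^'n \<Rightarrow> real^'n"
  assumes fm[measurable]: "f \<in> borel_measurable lebesgue" and Am[measurable]: "A \<in> lebesgue \<rightarrow>\<^sub>M lebesgue"
    and q: "0 < q"
    and bnd: "\<And>k. ballint q (\<lambda>y. min \<bar>f (A y)\<bar> (real k) * indicator (ball 0 (real k)) (A y)) a r \<le> X"
  shows "ballint q (\<lambda>y. f (A y)) a r \<le> X"
proof -
  define u where "u k x = min \<bar>f x\<bar> (real k) * indicator (ball 0 (real k)) x" for k :: nat and x
  define h where "h k y = ennreal (\<bar>u k (A y)\<bar> powr q) * indicator (ball a r) y" for k y
  have um: "(\<lambda>y. u k (A y)) \<in> borel_measurable lebesgue" for k unfolding u_def by measurable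
  have hm: "h k \<in> borel_measurable lebesgue" for k unfolding h_def using um[of k] by measurable
  have u0: "0 \<le> u k x" for k x unfolding u_def by simp
  have uf: "u k x \<le> \<bar>f x\<bar>" for k x unfolding u_def by (simp add: indicator_def)
  have umono: "u k x \<le> u (Suc k) x" for k x
    unfolding u_def by (auto simp: indicator_def intro: min.mono)
  have inc: "incseq h"
  proof (rule incseq_SucI, rule le_funI)
    fix k y show "h k y \<le> h (Suc k) y"
      unfolding h_def using umono[of k "A y"] u0 q
      by (intro mult_right_mono ennreal_leI powr_mono2) auto
  qed
  have sup: "(SUP k. h k y) = ennreal (\<bar>f (A y)\<bar> powr q) * indicator (ball a r) y" for y
  proof (rule antisym)
    show "(SUP k. h k y) \<le> ennreal (\<bar>f (A y)\<bar> powr q) * indicator (ball a r) y"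
      unfolding h_def using uf u0 q by (intro SUP_least mult_right_mono ennreal_leI powr_mono2) auto
  next
    define k where "k = nat \<lceil>\<bar>f (A y)\<bar> + norm (A y) + 1\<rceil>"
    have "\<bar>f (A y)\<bar> + norm (A y) + 1 \<le> real k" unfolding k_def by (intro nc1) simp
    then have k1: "\<bar>f (A y)\<bar> \<le> real k" and k2: "norm (A y) < real k" using norm_ge_zero[of "A y"] by linarith+
    then have "u k (A y) = \<bar>f (A y)\<bar>" unfolding u_def by (auto simp: indicator_def dist_norm min_def)
    then have "h k y = ennreal (\<bar>f (A y)\<bar> powr q) * indicator (ball a r) y" unfolding h_def by simp
    then show "ennreal (\<bar>f (A y)\<bar> powr q) * indicator (ball a r) y \<le> (SUP k. h k y)"
      by (metis SUP_upper UNIV_I)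
  qed
  have "ballint q (\<lambda>y. f (A y)) a r = (\<integral>\<^sup>+y. (SUP k. h k y) \<partial>lebesgue)"
    unfolding ballint_def sup by simp
  also have "\<dots> = (SUP k. integral\<^sup>N lebesgue (h k))"
    by (rule nn_integral_monotone_convergence_SUP[OF inc hm])
  also have "\<dots> \<le> X"
  proof (rule SUP_least)
    fix k
    have "integral\<^sup>N lebesgue (h k) = ballint q (\<lambda>y. min \<bar>f (A y)\<bar> (real k) * indicator (ball 0 (real k)) (A y)) a r"
      unfolding h_def ballint_def u_def by simp
    then show "integral\<^sup>N lebesgue (h k) \<le> X" using bnd[of k] by simp
  qed
  finally show ?thesis .
qed

theorem corollary4p3:
  fixes \<phi> :: "real \<Rightarrow> real" and p q :: real and \<psi> :: "real ^ 'n \<Rightarrow> real ^ 'n"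
  assumes phi: "\<phi> \<in> Gdec2"
    and q1: "1 \<le> q" and qp: "q \<le> p"
    and growth: "\<exists>C>0. \<forall>r>0. r powr (- real CARD('n) / p) \<le> C * \<phi> r"
    and diffeo: "diffeomorphism \<psi>"
    and bounded: "\<exists>C. \<forall>f \<in> morrey_space \<phi> q.
                    f \<circ> \<psi> \<in> morrey_space \<phi> q \<and>
                    morrey_norm \<phi> q (f \<circ> \<psi>) \<le> ennreal C * morrey_norm \<phi> q f"
  shows "\<exists>C>0. \<forall>x0. \<forall>f \<in> morrey_space \<phi> q.
           morrey_norm \<phi> q (\<lambda>y. f (jacobi \<psi> x0 *v y)) \<le> ennreal C * morrey_norm \<phi> q f"
proof -
  have G: "(\<forall>r>0. \<phi> r > 0) \<and>
     (\<exists>C>0. \<forall>r s. 0 < r \<longrightarrow> r < s \<longrightarrow> \<phi> s \<le> C * \<phi> r) \<and>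
     (\<exists>C>0. \<forall>r>0. \<forall>s>0. \<phi> (r * s) \<le> C * \<phi> r * \<phi> s) \<and>
     filterlim \<phi> at_top (at_right 0) \<and>
     (\<phi> \<longlongrightarrow> 0) at_top \<and>
     (\<exists>C>0. \<forall>r>0. \<phi> (1 / r) \<le> C / \<phi> r)"
    using phi unfolding Gdec2_def by (rule CollectD)
  have phipos: "\<And>r. r > 0 \<Longrightarrow> \<phi> r > 0" using G by blast
  obtain Cs where sub: "\<And>r s. r > 0 \<Longrightarrow> s > 0 \<Longrightarrow> \<phi> (r * s) \<le> Cs * \<phi> r * \<phi> s"
    using G[THEN conjunct2, THEN conjunct2, THEN conjunct1] by blast
  obtain Ci where Ci: "\<And>r. r > 0 \<Longrightarrow> \<phi> (1 / r) \<le> Ci / \<phi> r"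
    using G[THEN conjunct2, THEN conjunct2, THEN conjunct2, THEN conjunct2, THEN conjunct2] by blast
  have inv: "\<phi> t * \<phi> (1/t) \<le> Ci" if t: "t > 0" for t
  proof -
    have "\<phi> t * \<phi> (1/t) \<le> \<phi> t * (Ci / \<phi> t)" using Ci[OF t] phipos[OF t] by (intro mult_left_mono) auto
    then show ?thesis using phipos[OF t] by simp
  qed
  obtain Cg where Cg: "Cg > 0" and gr: "\<And>r. r > 0 \<Longrightarrow> r powr (- real CARD('n) / p) \<le> Cg * \<phi> r"
    using growth by blast
  obtain C0 where C0: "\<And>f. f \<in> morrey_space \<phi> q \<Longrightarrow> f \<circ> \<psi> \<in> morrey_space \<phi> q \<and>
                    morrey_norm \<phi> q (f \<circ> \<psi>) \<le> ennreal C0 * morrey_norm \<phi> q f"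
    using bounded by blast
  define Cp where "Cp = max C0 0"
  have Cp: "0 \<le> Cp" unfolding Cp_def by simp
  have eCp: "ennreal C0 = ennreal Cp" unfolding Cp_def by (cases "C0 \<le> 0") (auto simp: max_def ennreal_neg)
  have bnd: "\<And>g. g \<in> morrey_space \<phi> q \<Longrightarrow> g \<circ> \<psi> \<in> morrey_space \<phi> q \<and> morrey_norm \<phi> q (g \<circ> \<psi>) \<le> ennreal Cp * morrey_norm \<phi> q g"
    using C0 unfolding eCp by blast
  have Cs: "Cs > 0" using Cs_pos[OF phipos sub] .
  have Cipos: "Ci > 0"
  proof -
    have "\<phi> 1 * \<phi> 1 \<le> Ci" using inv[of 1] by simp
    moreover have "\<phi> 1 > 0" using phipos by simp
    ultimately have "0 < \<phi> 1 * \<phi> 1" by simp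
    then show ?thesis using \<open>\<phi> 1 * \<phi> 1 \<le> Ci\<close> by linarith
  qed
  define K where "K = 2 * (Cs * Cs * Cp * Ci)"
  have K: "K \<ge> 0" unfolding K_def using Cs Cipos Cp by simp
  have q0: "0 < q" using q1 by simp
  have cpsi: "continuous_on UNIV \<psi>"
    using diffeo unfolding diffeomorphism_def
    by (intro differentiable_imp_continuous_on differentiable_at_imp_differentiable_on) auto
  show ?thesis
  proof (intro exI[of _ "K + 1"] conjI allI ballI)
    show "K + 1 > 0" using K by simp
    fix x0 :: "real^'n" and f :: "real^'n \<Rightarrow> real" assume fs: "f \<in> morrey_space \<phi> q"
    define A where "A = frechet_derivative \<psi> (at x0)"
    have D: "(\<psi> has_derivative A) (at x0)" and linA: "linear A" and jac: "\<And>y. jacobi \<psi> x0 *v y = A y"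
      and "\<exists>Ai. linear Ai \<and> (\<forall>x. Ai (A x) = x) \<and> (\<forall>x. A (Ai x) = x)"
      using diffeo_deriv[OF diffeo, of x0] unfolding A_def by auto
    then obtain Ai where Ai: "linear Ai" "\<And>x. Ai (A x) = x" "\<And>x. A (Ai x) = x" by blast
    have Am[measurable]: "A \<in> lebesgue \<rightarrow>\<^sub>M lebesgue" using linear_iso_measurable[OF linA Ai] .
    have fm[measurable]: "f \<in> borel_measurable lebesgue" using fs unfolding morrey_space_def by simp
    have fin: "morrey_norm \<phi> q f < top" using fs unfolding morrey_space_def by simp
    define U where "U = enn2real (morrey_norm \<phi> q f)"
    have fU: "morrey_norm \<phi> q f = ennreal U" unfolding U_def using fin by simp
    have U: "0 \<le> U" unfolding U_def by simp
    have fB: "\<forall>a. \<forall>r>0. ballint q f a r \<le> ennreal ((\<phi> r * U) powr q * measure lborel (ball a r))"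
      using morrey_le_iff[where \<phi>=\<phi> and f=f, OF phipos q0 U] fU by simp
    have main: "\<forall>a. \<forall>r>0. ballint q (\<lambda>y. f (A y)) a r \<le> ennreal ((\<phi> r * (K * U)) powr q * measure lborel (ball a r))"
    proof (intro allI impI)
      fix a :: "real^'n" and r :: real assume r: "r > 0"
      show "ballint q (\<lambda>y. f (A y)) a r \<le> ennreal ((\<phi> r * (K * U)) powr q * measure lborel (ball a r))"
      proof (rule trunc_sup[OF fm Am q0])
        fix k :: nat
        define u where "u x = min \<bar>f x\<bar> (real k) * indicator (ball 0 (real k)) x" for x
        have um: "u \<in> borel_measurable lebesgue" unfolding u_def by measurable
        have u0: "0 \<le> u x" for x unfolding u_def by simp
        have uN: "u x \<le> real k" for x unfolding u_def by (simp add: indicator_def)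
        have us: "x \<notin> ball 0 (real k) \<Longrightarrow> u x = 0" for x unfolding u_def by simp
        have k0: "0 \<le> real k" by simp
        have uf: "\<bar>u x\<bar> \<le> \<bar>f x\<bar>" for x unfolding u_def by (simp add: indicator_def)
        have uU: "morrey_norm \<phi> q u \<le> ennreal U"
        proof -
          have "\<forall>a. \<forall>r>0. ballint q u a r \<le> ennreal ((\<phi> r * U) powr q * measure lborel (ball a r))"
          proof (intro allI impI)
            fix a :: "real^'n" and r :: real assume r: "r > 0"
            have "ballint q u a r \<le> ballint q f a r"
              unfolding ballint_def using uf q0
              by (intro nn_integral_mono mult_right_mono ennreal_leI powr_mono2) auto
            then show "ballint q u a r \<le> ennreal ((\<phi> r * U) powr q * measure lborel (ball a r))"
              using fB r by (meson order_trans)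
          qed
          then show ?thesis using morrey_le_iff[where \<phi>=\<phi>, OF phipos q0 U] by blast
        qed
        have "ballint q (\<lambda>y. u (A y)) a r \<le> ennreal ((\<phi> r * (2 * (Cs * Cs * Cp * Ci) * U)) powr q * measure lborel (ball a r))"
          by (rule core[where \<phi>=\<phi>, OF phipos sub inv gr Cg q1 qp bnd Cp D cpsi linA um u0 uN us k0 U uU r])
        then show "ballint q (\<lambda>y. min \<bar>f (A y)\<bar> (real k) * indicator (ball 0 (real k)) (A y)) a r
              \<le> ennreal ((\<phi> r * (K * U)) powr q * measure lborel (ball a r))"
          unfolding u_def K_def by (simp add: mult_ac)
      qed
    qed
    have KU: "0 \<le> K * U" using K U by simp
    have "morrey_norm \<phi> q (\<lambda>y. f (A y)) \<le> ennreal (K * U)"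
      using main morrey_le_iff[where \<phi>=\<phi>, OF phipos q0 KU] by blast
    also have "\<dots> \<le> ennreal ((K + 1) * U)" using U by (intro ennreal_leI mult_right_mono) auto
    also have "\<dots> = ennreal (K + 1) * morrey_norm \<phi> q f" unfolding fU using K by (simp add: ennreal_mult' del: ennreal_plus)
    finally show "morrey_norm \<phi> q (\<lambda>y. f (jacobi \<psi> x0 *v y)) \<le> ennreal (K + 1) * morrey_norm \<phi> q f"
      unfolding jac .
  qed
qed

end
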